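(* Let $\Omega_L=(0,L)\times(0,\infty)$ with coordinates $(x,Y)$. Steady Euler flows $[u^0_e,v^0_e,P^0_e]$ on $\Omega_L$ are smooth solutions of $$u^0_e\partial_x u^0_e+v^0_e\partial_Y u^0_e+\partial_x P^0_e=0,\quad u^0_e\partial_x v^0_e+v^0_e\partial_Y v^0_e+\partial_Y P^0_e=0,\quad \partial_x u^0_e+\partial_Y v^0_e=0\ \text{ in }\Omega_L,$$ with $v^0_e|_{Y=0}=0$ and $v^0_e\to 0$ as $Y\to\infty$. Then there exists a nontrivial (non-shear) set of such Euler flows satisfying: (i) $0<c_0\le u^0_e\le C_0<\infty$ for some constants $c_0,C_0$; (ii) $\|v^0_e/Y\|_{L^\infty}\ll 1$; (iii) $\|Y^k\nabla^m v^0_e\|_{L^\infty}<\infty$ for all $k,m\ge 0$ up to any prescribed (large) order; (iv) $\|Y^k\nabla^m u^0_e\|_{L^\infty}<\infty$ for all $k\ge 0$, $m\ge 1$ up to any prescribed (large) order. Precisely: for every $\eta>0$ and every integer $K\ge 1$ there is $L_0>0$ such that for every $L\in(0,L_0]$ there exists such a flow on $\Omega_L$ with $v^0_e\not\equiv 0$ (so $u^0_e$ genuinely depends on $x$), satisfying (i), $\|v^0_e/Y\|_{L^\infty(\Omega_L)}\le\eta$, $\|Y^k\nabla^m v^0_e\|_{L^\infty}<\infty$ for $0\le k,m\le K$, and $\|Y^k\nabla^m u^0_e\|_{L^\infty}<\infty$ for $0\le k\le K$, $1\le m\le K$.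
   Context: $\nabla^m$ denotes the collection of all partial derivatives of order $m$ in $(x,Y)$. A shear flow is one of the form $(U(Y),0)$; "nontrivial" means the flows constructed are not shear flows. *)

theory Defs
  imports "HOL-Analysis.Analysis"
begin

definition pdX :: "(real \<Rightarrow> real \<Rightarrow> real) \<Rightarrow> real \<Rightarrow> real \<Rightarrow> real" where
  "pdX f = (\<lambda>x Y. deriv (\<lambda>t. f t Y) x)"

definition pdY :: "(real \<Rightarrow> real \<Rightarrow> real) \<Rightarrow> real \<Rightarrow> real \<Rightarrow> real" where
  "pdY f = (\<lambda>x Y. deriv (\<lambda>t. f x t) Y)"

text \<open>Iterated partial derivative along a word: True = d/dx, False = d/dY
  (the head of the list is applied last).\<close>
fun pder :: "bool list \<Rightarrow> (real \<Rightarrow> real \<Rightarrow> real) \<Rightarrow> real \<Rightarrow> real \<Rightarrow> real" where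
  "pder [] f = f"
| "pder (True # w) f = pdX (pder w f)"
| "pder (False # w) f = pdY (pder w f)"

definition Omega :: "real \<Rightarrow> (real \<times> real) set" where
  "Omega L = {0<..<L} \<times> {0<..}"

definition smooth2_on :: "(real \<times> real) set \<Rightarrow> (real \<Rightarrow> real \<Rightarrow> real) \<Rightarrow> bool" where
  "smooth2_on S f \<longleftrightarrow>
     (\<forall>w. continuous_on S (\<lambda>p. pder w f (fst p) (snd p)) \<and>
          (\<forall>(x,Y)\<in>S. (\<lambda>t. pder w f t Y) differentiable (at x) \<and>
                      (\<lambda>t. pder w f x t) differentiable (at Y)))"

text \<open>Finiteness of the weighted sup norm || Y^k nabla^m f ||_{L^infinity(Omega_L)}:
  every partial derivative of order m, weighted by Y^k, is bounded on Omega_L.\<close>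
definition weighted_bounded :: "real \<Rightarrow> nat \<Rightarrow> nat \<Rightarrow> (real \<Rightarrow> real \<Rightarrow> real) \<Rightarrow> bool" where
  "weighted_bounded L k m f \<longleftrightarrow>
     (\<forall>w. length w = m \<longrightarrow>
        (\<exists>B. \<forall>(x,Y)\<in>Omega L. \<bar>Y ^ k * pder w f x Y\<bar> \<le> B))"

definition steady_euler :: "real \<Rightarrow> (real \<Rightarrow> real \<Rightarrow> real) \<Rightarrow> (real \<Rightarrow> real \<Rightarrow> real)
    \<Rightarrow> (real \<Rightarrow> real \<Rightarrow> real) \<Rightarrow> bool" where
  "steady_euler L u v P \<longleftrightarrow>
     smooth2_on (Omega L) u \<and> smooth2_on (Omega L) v \<and> smooth2_on (Omega L) P \<and>
     (\<forall>(x,Y)\<in>Omega L.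
        u x Y * pdX u x Y + v x Y * pdY u x Y + pdX P x Y = 0 \<and>
        u x Y * pdX v x Y + v x Y * pdY v x Y + pdY P x Y = 0 \<and>
        pdX u x Y + pdY v x Y = 0) \<and>
     (\<forall>x\<in>{0<..<L}. ((\<lambda>Y. v x Y) \<longlongrightarrow> 0) (at_right 0)) \<and>
     (\<forall>x\<in>{0<..<L}. ((\<lambda>Y. v x Y) \<longlongrightarrow> 0) at_top)"

end

theory Submission
  imports Defs "HOL-Real_Asymp.Real_Asymp"
begin

abbreviation cz :: "real \<Rightarrow> real \<Rightarrow> complex" where
  "cz x Y \<equiv> of_real x + \<i> * of_real Y"

lemma dX_gen:
  assumes "\<And>z. (H has_field_derivative H' z) (at z)"
  shows "((\<lambda>t. H (cz t Y)) has_vector_derivative H' (cz x Y)) (at x)"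
proof -
  have p: "((\<lambda>t. cz t Y) has_vector_derivative 1) (at x)"
    by (auto intro!: derivative_eq_intros)
  from field_vector_diff_chain_at[OF p assms]
  show ?thesis by (simp add: o_def)
qed

lemma dY_gen:
  assumes "\<And>z. (H has_field_derivative H' z) (at z)"
  shows "((\<lambda>t. H (cz x t)) has_vector_derivative \<i> * H' (cz x Y)) (at Y)"
proof -
  have p: "((\<lambda>t. cz x t) has_vector_derivative \<i>) (at Y)"
    by (auto intro!: derivative_eq_intros)
  from field_vector_diff_chain_at[OF p assms]
  show ?thesis by (simp add: o_def)
qed

definition Dp :: "complex poly \<Rightarrow> complex poly" where
  "Dp q = pderiv q + [:0,2:] * q"

definition E :: "complex poly \<Rightarrow> real \<Rightarrow> real \<Rightarrow> real" where
  "E q x Y = Re (poly q (cz x Y) * exp ((cz x Y)^2))"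

lemma G_deriv: "((\<lambda>z. poly q z * exp (z^2)) has_field_derivative poly (Dp q) z * exp (z^2)) (at z)"
proof -
  have "((\<lambda>z. exp (z^2)) has_field_derivative exp(z^2) * (2*z)) (at z)"
    by (auto intro!: derivative_eq_intros)
  from DERIV_mult[OF poly_DERIV this] show ?thesis
    by (simp add: Dp_def algebra_simps)
qed

lemma E_dX: "((\<lambda>t. E q t Y) has_real_derivative E (Dp q) x Y) (at x)"
  unfolding E_def using has_field_derivative_Re[OF dX_gen[OF G_deriv]] .

lemma E_dY: "((\<lambda>t. E q x t) has_real_derivative E (smult \<i> (Dp q)) x Y) (at Y)"
  unfolding E_def using has_field_derivative_Re[OF dY_gen[OF G_deriv]] by (simp add: mult.assoc)

lemma pdX_E: "pdX (E q) = E (Dp q)"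
  unfolding pdX_def by (intro ext DERIV_imp_deriv E_dX)

lemma pdY_E: "pdY (E q) = E (smult \<i> (Dp q))"
  unfolding pdY_def by (intro ext DERIV_imp_deriv E_dY)

lemma E_cont: "continuous_on UNIV (\<lambda>p. E q (fst p) (snd p))"
  unfolding E_def by (intro continuous_intros continuous_on_poly)


inductive_set SM :: "(real \<Rightarrow> real \<Rightarrow> real) set" where
  c: "(\<lambda>x Y. c) \<in> SM"
| e: "E q \<in> SM"
| a: "f \<in> SM \<Longrightarrow> g \<in> SM \<Longrightarrow> (\<lambda>x Y. f x Y + g x Y) \<in> SM"
| m: "f \<in> SM \<Longrightarrow> g \<in> SM \<Longrightarrow> (\<lambda>x Y. f x Y * g x Y) \<in> SM"

lemma pdX_eq: "(\<And>x Y. ((\<lambda>t. f t Y) has_real_derivative g x Y) (at x)) \<Longrightarrow> pdX f = g"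
  unfolding pdX_def by (intro ext DERIV_imp_deriv) auto

lemma pdY_eq: "(\<And>x Y. ((\<lambda>t. f x t) has_real_derivative g x Y) (at Y)) \<Longrightarrow> pdY f = g"
  unfolding pdY_def by (intro ext DERIV_imp_deriv) auto

lemma SM_deriv:
  "f \<in> SM \<Longrightarrow> (\<forall>x Y. ((\<lambda>t. f t Y) has_real_derivative pdX f x Y) (at x) \<and>
      ((\<lambda>t. f x t) has_real_derivative pdY f x Y) (at Y)) \<and> pdX f \<in> SM \<and> pdY f \<in> SM"
proof (induction rule: SM.induct)
  case (c c)
  have "pdX (\<lambda>x Y. c) = (\<lambda>x Y. 0)" by (rule pdX_eq) auto
  moreover have "pdY (\<lambda>x Y. c) = (\<lambda>x Y. 0)" by (rule pdY_eq) auto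
  ultimately show ?case by (auto intro: SM.c)
next
  case (e q)
  show ?case using E_dX E_dY by (auto simp: pdX_E pdY_E intro: SM.e)
next
  case (a f g)
  have hx: "\<And>x Y. ((\<lambda>t. f t Y + g t Y) has_real_derivative pdX f x Y + pdX g x Y) (at x)"
    using a by (auto intro!: DERIV_add)
  have hy: "\<And>x Y. ((\<lambda>t. f x t + g x t) has_real_derivative pdY f x Y + pdY g x Y) (at Y)"
    using a by (auto intro!: DERIV_add)
  have "pdX (\<lambda>x Y. f x Y + g x Y) = (\<lambda>x Y. pdX f x Y + pdX g x Y)" by (rule pdX_eq[OF hx])
  moreover have "pdY (\<lambda>x Y. f x Y + g x Y) = (\<lambda>x Y. pdY f x Y + pdY g x Y)" by (rule pdY_eq[OF hy])
  ultimately show ?case using a hx hy by (auto intro: SM.a)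
next
  case (m f g)
  have hx: "\<And>x Y. ((\<lambda>t. f t Y * g t Y) has_real_derivative pdX f x Y * g x Y + pdX g x Y * f x Y) (at x)"
    using m by (auto intro!: DERIV_mult)
  have hy: "\<And>x Y. ((\<lambda>t. f x t * g x t) has_real_derivative pdY f x Y * g x Y + pdY g x Y * f x Y) (at Y)"
    using m by (auto intro!: DERIV_mult)
  have "pdX (\<lambda>x Y. f x Y * g x Y) = (\<lambda>x Y. pdX f x Y * g x Y + pdX g x Y * f x Y)" by (rule pdX_eq[OF hx])
  moreover have "pdY (\<lambda>x Y. f x Y * g x Y) = (\<lambda>x Y. pdY f x Y * g x Y + pdY g x Y * f x Y)" by (rule pdY_eq[OF hy])
  ultimately show ?case using m hx hy by (auto intro!: SM.a SM.m)
qed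

lemma SM_cont: "f \<in> SM \<Longrightarrow> continuous_on UNIV (\<lambda>p. f (fst p) (snd p))"
  by (induction rule: SM.induct) (auto intro!: continuous_intros E_cont)

lemma SM_pder: "f \<in> SM \<Longrightarrow> pder w f \<in> SM"
proof (induction w)
  case Nil then show ?case by simp
next
  case (Cons b w) then show ?case using SM_deriv by (cases b) auto
qed

lemma SM_smooth: "f \<in> SM \<Longrightarrow> smooth2_on S f"
  unfolding smooth2_on_def
proof (intro allI conjI ballI)
  fix w assume f: "f \<in> SM"
  hence g: "pder w f \<in> SM" by (rule SM_pder)
  show "continuous_on S (\<lambda>p. pder w f (fst p) (snd p))"
    using SM_cont[OF g] continuous_on_subset by blast
  fix p assume "p \<in> S"
  show "case p of (x, Y) \<Rightarrow> (\<lambda>t. pder w f t Y) differentiable at x \<and> (\<lambda>t. pder w f x t) differentiable at Y"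
    using SM_deriv[OF g] by (auto simp: split_beta intro: differentiableI has_field_derivative_imp_has_derivative)
qed


lemma pdX_cE: "pdX (\<lambda>x Y. c + E q x Y) = (\<lambda>x Y. 0 + E (Dp q) x Y)"
  by (rule pdX_eq) (auto intro!: DERIV_add[OF DERIV_const E_dX, simplified])

lemma pdY_cE: "pdY (\<lambda>x Y. c + E q x Y) = (\<lambda>x Y. 0 + E (smult \<i> (Dp q)) x Y)"
  by (rule pdY_eq) (auto intro!: DERIV_add[OF DERIV_const E_dY, simplified])

lemma pder_cE: "\<exists>q'. pder w (\<lambda>x Y. c + E q x Y) = (\<lambda>x Y. (if w = [] then c else 0) + E q' x Y)"
proof (induction w)
  case Nil then show ?case by auto
next
  case (Cons b w)
  then obtain q' where q': "pder w (\<lambda>x Y. c + E q x Y) = (\<lambda>x Y. (if w = [] then c else 0) + E q' x Y)" by blast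
  show ?case
  proof (cases b)
    case True
    then show ?thesis using q' pdX_cE[of "if w = [] then c else 0" q'] by auto
  next
    case False
    then show ?thesis using q' pdY_cE[of "if w = [] then c else 0" q'] by auto
  qed
qed

lemma poly_norm_bound:
  fixes q :: "complex poly"
  shows "norm (poly q z) \<le> (\<Sum>i\<le>degree q. norm (coeff q i)) * (1 + norm z)^degree q"
proof -
  have "norm (poly q z) \<le> (\<Sum>i\<le>degree q. norm (coeff q i * z ^ i))"
    unfolding poly_altdef by (rule norm_sum)
  also have "\<dots> \<le> (\<Sum>i\<le>degree q. norm (coeff q i) * (1 + norm z)^degree q)"
  proof (rule sum_mono)
    fix i assume "i \<in> {..degree q}"
    hence i: "i \<le> degree q" by simp
    have "norm z ^ i \<le> (1 + norm z) ^ i" by (rule power_mono) auto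
    also have "\<dots> \<le> (1 + norm z) ^ degree q" by (rule power_increasing[OF i]) auto
    finally show "norm (coeff q i * z ^ i) \<le> norm (coeff q i) * (1 + norm z)^degree q"
      by (auto simp: norm_mult norm_power intro: mult_left_mono)
  qed
  also have "\<dots> = (\<Sum>i\<le>degree q. norm (coeff q i)) * (1 + norm z)^degree q"
    by (simp add: sum_distrib_right)
  finally show ?thesis .
qed

lemma pow_exp_bound:
  assumes Y: "0 \<le> Y"
  shows "(2+Y)^N * exp(-(Y^2)) \<le> real (Suc N) ^ Suc N * exp 3"
proof -
  define n where "n = Suc N"
  have n0: "0 < n" by (simp add: n_def)
  have "(1 + (2+Y) / real n)^n \<le> exp (2+Y)"
    by (rule exp_ge_one_plus_x_over_n_power_n) (use Y n0 in auto)
  moreover have "((2+Y) / real n)^n \<le> (1 + (2+Y) / real n)^n"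
    by (rule power_mono) (use Y in auto)
  ultimately have "((2+Y) / real n)^n \<le> exp (2+Y)" by linarith
  hence h: "(2+Y)^n \<le> real n ^ n * exp (2+Y)"
    using n0 by (simp add: power_divide field_simps)
  have "(2+Y)^N \<le> (2+Y)^n" unfolding n_def by (rule power_increasing) (use Y in auto)
  hence "(2+Y)^N \<le> real n ^ n * exp (2+Y)" using h by linarith
  hence "(2+Y)^N * exp(-(Y^2)) \<le> real n ^ n * exp (2+Y) * exp(-(Y^2))"
    by (rule mult_right_mono) auto
  also have "\<dots> = real n ^ n * exp (2 + Y - Y^2)" by (simp add: exp_add exp_diff exp_minus divide_inverse)
  also have "\<dots> \<le> real n ^ n * exp 3"
  proof -
    have e1: "(Y-1/2)^2 = Y^2 - Y + 1/4" by (simp add: power2_eq_square algebra_simps)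
    have "0 \<le> (Y-1/2)^2" by simp
    hence "Y - Y^2 \<le> 1" using e1 by linarith
    hence "exp (2 + Y - Y^2) \<le> exp 3" by simp
    thus ?thesis by (rule mult_left_mono) auto
  qed
  finally show ?thesis by (simp add: n_def)
qed


lemma E_wbound:
  assumes L: "0 < L" "L \<le> 1"
  shows "\<exists>B. \<forall>(x,Y)\<in>Omega L. \<bar>Y^k * E q x Y\<bar> \<le> B"
proof -
  define M where "M = (\<Sum>i\<le>degree q. norm (coeff q i))"
  define d where "d = degree q"
  have M0: "0 \<le> M" by (simp add: M_def sum_nonneg)
  show ?thesis
  proof (rule exI[of _ "M * exp 1 * (real (Suc (k+d)) ^ Suc (k+d) * exp 3)"], intro ballI)
    fix p assume "p \<in> Omega L"
    then obtain x Y where p: "p = (x,Y)" and x: "0<x" "x<L" and Y: "0<Y"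
      by (auto simp: Omega_def)
    let ?z = "cz x Y"
    have "norm ?z \<le> norm (complex_of_real x) + norm (\<i> * complex_of_real Y)" by (rule norm_triangle_ineq)
    also have "\<dots> = \<bar>x\<bar> + \<bar>Y\<bar>" by (simp add: norm_mult)
    finally have nz: "norm ?z \<le> 1 + Y" using x Y L by linarith
    have re: "Re (?z^2) = x^2 - Y^2" by (simp add: power2_eq_square)
    have pb: "norm (poly q ?z) \<le> M * (2+Y)^d"
    proof -
      have "norm (poly q ?z) \<le> M * (1 + norm ?z)^d" using poly_norm_bound[of q ?z] by (simp add: M_def d_def)
      also have "\<dots> \<le> M * (2+Y)^d"
        by (rule mult_left_mono[OF power_mono M0]) (use nz in auto)
      finally show ?thesis .
    qed
    have eb: "exp (x^2 - Y^2) \<le> exp 1 * exp(-(Y^2))"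
    proof -
      have "x^2 \<le> 1" using x L by (simp add: power_le_one)
      hence "exp (x^2 - Y^2) \<le> exp (1 - Y^2)" by simp
      thus ?thesis by (simp add: exp_diff exp_minus divide_inverse)
    qed
    have "\<bar>E q x Y\<bar> \<le> norm (poly q ?z * exp (?z^2))" unfolding E_def by (rule abs_Re_le_cmod)
    also have "\<dots> = norm (poly q ?z) * exp (x^2 - Y^2)" by (simp add: norm_mult re)
    also have "\<dots> \<le> M * (2+Y)^d * (exp 1 * exp(-(Y^2)))"
      by (rule mult_mono[OF pb eb]) (use M0 Y in auto)
    finally have Eb: "\<bar>E q x Y\<bar> \<le> M * (2+Y)^d * (exp 1 * exp(-(Y^2)))" .
    have "\<bar>Y^k * E q x Y\<bar> = Y^k * \<bar>E q x Y\<bar>" using Y by (simp add: abs_mult)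
    also have "\<dots> \<le> (2+Y)^k * (M * (2+Y)^d * (exp 1 * exp(-(Y^2))))"
      by (rule mult_mono[OF power_mono Eb]) (use Y in auto)
    also have "\<dots> = M * exp 1 * ((2+Y)^(k+d) * exp(-(Y^2)))" by (simp add: power_add)
    also have "\<dots> \<le> M * exp 1 * (real (Suc (k+d)) ^ Suc (k+d) * exp 3)"
      by (rule mult_left_mono[OF pow_exp_bound]) (use Y M0 in auto)
    finally show "case p of (x,Y) \<Rightarrow> \<bar>Y^k * E q x Y\<bar> \<le> M * exp 1 * (real (Suc (k+d)) ^ Suc (k+d) * exp 3)"
      using p by simp
  qed
qed

lemma wb_cE:
  assumes L: "0 < L" "L \<le> 1" and m: "c = 0 \<or> 1 \<le> m"
  shows "weighted_bounded L k m (\<lambda>x Y. c + E q x Y)"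
  unfolding weighted_bounded_def
proof (intro allI impI)
  fix w :: "bool list" assume w: "length w = m"
  obtain q' where q': "pder w (\<lambda>x Y. c + E q x Y) = (\<lambda>x Y. (if w = [] then c else 0) + E q' x Y)"
    using pder_cE by blast
  have "(if w = [] then c else 0) = 0" using m w by auto
  then show "\<exists>B. \<forall>(x, Y)\<in>Omega L. \<bar>Y ^ k * pder w (\<lambda>x Y. c + E q x Y) x Y\<bar> \<le> B"
    using E_wbound[OF L, of k q'] q' by simp
qed


lemma E_q0: "E [:complex_of_real e:] x Y = e * exp (x^2 - Y^2) * cos (2*x*Y)"
  unfolding E_def by (simp add: Re_exp power2_eq_square algebra_simps)

lemma E_q1: "E (smult \<i> [:complex_of_real e:]) x Y = - e * exp (x^2 - Y^2) * sin (2*x*Y)"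
  unfolding E_def by (simp add: Im_exp power2_eq_square algebra_simps)

lemma Dp_smult: "Dp (smult c q) = smult c (Dp q)"
  unfolding Dp_def by (simp add: pderiv_smult smult_add_right mult.commute)

lemma E_ii: "E (smult \<i> (smult \<i> p)) x Y = - E p x Y"
  unfolding E_def by simp

lemma E_neg: "E (- p) x Y = - E p x Y"
  unfolding E_def by simp

lemma lim_top: "((\<lambda>Y::real. exp (a - Y^2)) \<longlongrightarrow> 0) at_top"
  by real_asymp


theorem propositionA1:
  fixes \<eta> :: real and K :: nat
  assumes "\<eta> > 0" and "K \<ge> 1"
  shows "\<exists>L0>0. \<forall>L. 0 < L \<and> L \<le> L0 \<longrightarrow>
    (\<exists>u v P. steady_euler L u v P \<and>
       (\<exists>(x,Y)\<in>Omega L. v x Y \<noteq> 0) \<and>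
       (\<exists>x1 x2 Y. x1 \<in> {0<..<L} \<and> x2 \<in> {0<..<L} \<and> Y > 0 \<and> u x1 Y \<noteq> u x2 Y) \<and>
       (\<exists>c0 C0. 0 < c0 \<and> (\<forall>(x,Y)\<in>Omega L. c0 \<le> u x Y \<and> u x Y \<le> C0)) \<and>
       (\<forall>(x,Y)\<in>Omega L. \<bar>v x Y / Y\<bar> \<le> \<eta>) \<and>
       (\<forall>k m. k \<le> K \<and> m \<le> K \<longrightarrow> weighted_bounded L k m v) \<and>
       (\<forall>k m. k \<le> K \<and> 1 \<le> m \<and> m \<le> K \<longrightarrow> weighted_bounded L k m u))"
proof (rule exI[of _ 1], intro conjI allI impI)
  show "(0::real) < 1" by simp
  fix L :: real assume L: "0 < L \<and> L \<le> 1"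
  hence L0: "0 < L" and L1: "L \<le> 1" by auto
  define e where "e = min (1/8) (\<eta>/8)"
  have e0: "0 < e" using assms by (simp add: e_def)
  have e1: "e \<le> 1/8" and e2: "e \<le> \<eta>/8" by (auto simp: e_def)
  define q0 where "q0 = [:complex_of_real e:]"
  define q1 where "q1 = smult \<i> q0"
  define u where "u = (\<lambda>x Y. 1 + E q0 x Y)"
  define v where "v = (\<lambda>x Y. 0 + E q1 x Y)"
  define P where "P = (\<lambda>x Y. (-1/2) * (u x Y * u x Y + v x Y * v x Y))"
  define ux where "ux = E (Dp q0)"
  define uy where "uy = E (smult \<i> (Dp q0))"
  define vx where "vx = E (Dp q1)"
  define vy where "vy = E (smult \<i> (Dp q1))"
  have uf: "\<And>x Y. u x Y = 1 + e * exp (x^2 - Y^2) * cos (2*x*Y)"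
    by (simp add: u_def q0_def E_q0)
  have vf: "\<And>x Y. v x Y = - e * exp (x^2 - Y^2) * sin (2*x*Y)"
    by (simp only: v_def q1_def q0_def E_q1 add_0_left)
  have vxuy: "vx = uy" unfolding vx_def uy_def q1_def by (simp add: Dp_smult)
  have vyux: "\<And>x Y. vy x Y = - ux x Y" unfolding vy_def ux_def q1_def by (simp add: Dp_smult E_ii E_neg)
  have pXu: "pdX u = (\<lambda>x Y. 0 + ux x Y)" unfolding u_def ux_def by (rule pdX_cE)
  have pYu: "pdY u = (\<lambda>x Y. 0 + uy x Y)" unfolding u_def uy_def by (rule pdY_cE)
  have pXv: "pdX v = (\<lambda>x Y. 0 + vx x Y)" unfolding v_def vx_def by (rule pdX_cE)
  have pYv: "pdY v = (\<lambda>x Y. 0 + vy x Y)" unfolding v_def vy_def by (rule pdY_cE)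
  have dux: "\<And>x Y. ((\<lambda>t. u t Y) has_real_derivative ux x Y) (at x)"
    unfolding u_def ux_def by (rule DERIV_add[OF DERIV_const E_dX, simplified])
  have duy: "\<And>x Y. ((\<lambda>t. u x t) has_real_derivative uy x Y) (at Y)"
    unfolding u_def uy_def by (rule DERIV_add[OF DERIV_const E_dY, simplified])
  have dvx: "\<And>x Y. ((\<lambda>t. v t Y) has_real_derivative vx x Y) (at x)"
    unfolding v_def vx_def by (rule DERIV_add[OF DERIV_const E_dX, simplified])
  have dvy: "\<And>x Y. ((\<lambda>t. v x t) has_real_derivative vy x Y) (at Y)"
    unfolding v_def vy_def by (rule DERIV_add[OF DERIV_const E_dY, simplified])
  have pXP: "pdX P = (\<lambda>x Y. (-1/2) * ((ux x Y * u x Y + ux x Y * u x Y) + (vx x Y * v x Y + vx x Y * v x Y)))"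
    unfolding P_def
    by (rule pdX_eq, rule DERIV_cmult, rule DERIV_add, rule DERIV_mult[OF dux dux], rule DERIV_mult[OF dvx dvx])
  have pYP: "pdY P = (\<lambda>x Y. (-1/2) * ((uy x Y * u x Y + uy x Y * u x Y) + (vy x Y * v x Y + vy x Y * v x Y)))"
    unfolding P_def
    by (rule pdY_eq, rule DERIV_cmult, rule DERIV_add, rule DERIV_mult[OF duy duy], rule DERIV_mult[OF dvy dvy])
  have uS: "u \<in> SM" unfolding u_def by (rule SM.a[OF SM.c SM.e])
  have vS: "v \<in> SM" unfolding v_def by (rule SM.a[OF SM.c SM.e])
  have PS: "P \<in> SM" unfolding P_def by (rule SM.m[OF SM.c SM.a[OF SM.m[OF uS uS] SM.m[OF vS vS]]])
  have ex3: "\<And>x. 0 < x \<Longrightarrow> x < L \<Longrightarrow> exp (x^2 - Y^2) \<le> 3" for Y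
  proof -
    fix x assume "0 < x" "x < L"
    hence "x^2 \<le> 1" using L1 by (intro power_le_one) auto
    moreover have "0 \<le> Y^2" by simp
    ultimately have "x^2 - Y^2 \<le> 1" by linarith
    hence "exp (x^2 - Y^2) \<le> exp 1" by simp
    thus "exp (x^2 - Y^2) \<le> 3" using e_less_272 by linarith
  qed
  have lim0: "((\<lambda>Y. v x Y) \<longlongrightarrow> 0) (at_right 0)" for x
  proof -
    have "((\<lambda>Y. - e * exp (x^2 - Y^2) * sin (2*x*Y)) \<longlongrightarrow> - e * exp (x^2 - 0^2) * sin (2*x*0)) (at_right 0)"
      by (intro tendsto_intros)
    thus ?thesis by (simp add: vf)
  qed
  have limt: "((\<lambda>Y. v x Y) \<longlongrightarrow> 0) at_top" for x
  proof (rule Lim_null_comparison)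
    show "\<forall>\<^sub>F Y in at_top. norm (v x Y) \<le> e * exp (x^2 - Y^2)"
      by (intro always_eventually allI) (use e0 in \<open>auto simp: vf abs_mult\<close>)
    show "((\<lambda>Y. e * exp (x^2 - Y^2)) \<longlongrightarrow> 0) at_top"
      using tendsto_mult_left[OF lim_top, of e "x^2"] by simp
  qed
  show "\<exists>u v P. steady_euler L u v P \<and>
       (\<exists>(x,Y)\<in>Omega L. v x Y \<noteq> 0) \<and>
       (\<exists>x1 x2 Y. x1 \<in> {0<..<L} \<and> x2 \<in> {0<..<L} \<and> Y > 0 \<and> u x1 Y \<noteq> u x2 Y) \<and>
       (\<exists>c0 C0. 0 < c0 \<and> (\<forall>(x,Y)\<in>Omega L. c0 \<le> u x Y \<and> u x Y \<le> C0)) \<and>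
       (\<forall>(x,Y)\<in>Omega L. \<bar>v x Y / Y\<bar> \<le> \<eta>) \<and>
       (\<forall>k m. k \<le> K \<and> m \<le> K \<longrightarrow> weighted_bounded L k m v) \<and>
       (\<forall>k m. k \<le> K \<and> 1 \<le> m \<and> m \<le> K \<longrightarrow> weighted_bounded L k m u)"
  proof (rule exI[of _ u], rule exI[of _ v], rule exI[of _ P], intro conjI)
    show "steady_euler L u v P"
      unfolding steady_euler_def
    proof (intro conjI ballI)
      show "smooth2_on (Omega L) u" by (rule SM_smooth[OF uS])
      show "smooth2_on (Omega L) v" by (rule SM_smooth[OF vS])
      show "smooth2_on (Omega L) P" by (rule SM_smooth[OF PS])
      fix p assume "p \<in> Omega L"
      show "case p of (x, Y) \<Rightarrow>
         u x Y * pdX u x Y + v x Y * pdY u x Y + pdX P x Y = 0 \<and>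
         u x Y * pdX v x Y + v x Y * pdY v x Y + pdY P x Y = 0 \<and>
         pdX u x Y + pdY v x Y = 0"
        by (simp add: split_beta pXu pYu pXv pYv pXP pYP vxuy vyux algebra_simps)
    next
      fix x :: real
      show "((\<lambda>Y. v x Y) \<longlongrightarrow> 0) (at_right 0)" by (rule lim0)
      show "((\<lambda>Y. v x Y) \<longlongrightarrow> 0) at_top" by (rule limt)
    qed
    show "\<forall>k m. k \<le> K \<and> m \<le> K \<longrightarrow> weighted_bounded L k m v"
      unfolding v_def by (intro allI impI wb_cE[OF L0 L1]) simp
    show "\<forall>k m. k \<le> K \<and> 1 \<le> m \<and> m \<le> K \<longrightarrow> weighted_bounded L k m u"
      unfolding u_def by (intro allI impI wb_cE[OF L0 L1]) simp
    show "\<forall>(x,Y)\<in>Omega L. \<bar>v x Y / Y\<bar> \<le> \<eta>"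
    proof (intro ballI)
      fix p assume "p \<in> Omega L"
      then obtain x Y where p: "p = (x,Y)" and x: "0<x" "x<L" and Y: "0<Y"
        by (auto simp: Omega_def)
      have xy: "x*Y \<le> 1*Y" by (rule mult_right_mono) (use x Y L1 in auto)
      have "\<bar>2*x*Y\<bar> = 2*(x*Y)" using x Y by simp
      hence s: "\<bar>sin (2*x*Y)\<bar> \<le> 2*Y"
        using abs_sin_x_le_abs_x[of "2*x*Y"] xy by linarith
      have ee: "exp (x^2 - Y^2) \<le> 3" using ex3 x by blast
      have "\<bar>v x Y\<bar> = e * exp (x^2 - Y^2) * \<bar>sin (2*x*Y)\<bar>" using e0 by (simp add: vf abs_mult)
      also have "\<dots> \<le> e * 3 * (2*Y)"
      proof -
        have "exp (x^2 - Y^2) * \<bar>sin (2*x*Y)\<bar> \<le> 3 * (2*Y)" by (rule mult_mono[OF ee s]) auto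
        hence "e * (exp (x^2 - Y^2) * \<bar>sin (2*x*Y)\<bar>) \<le> e * (3 * (2*Y))" by (rule mult_left_mono) (use e0 in auto)
        thus ?thesis by (simp add: mult.assoc)
      qed
      also have "\<dots> = (6*e) * Y" by simp
      also have "\<dots> \<le> \<eta> * Y" using e2 e0 Y by (intro mult_right_mono) auto
      finally have "\<bar>v x Y\<bar> \<le> \<eta> * Y" .
      hence "\<bar>v x Y / Y\<bar> \<le> \<eta>" using Y by (simp add: abs_div divide_le_eq)
      thus "case p of (x,Y) \<Rightarrow> \<bar>v x Y / Y\<bar> \<le> \<eta>" using p by simp
    qed
    have ub: "\<forall>(x,Y)\<in>Omega L. 1/2 \<le> u x Y \<and> u x Y \<le> 2"
    proof (intro ballI)
      fix p assume "p \<in> Omega L"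
      then obtain x Y where p: "p = (x,Y)" and x: "0<x" "x<L" and Y: "0<Y"
        by (auto simp: Omega_def)
      have ee: "exp (x^2 - Y^2) \<le> 3" using ex3 x by blast
      have "exp (x^2 - Y^2) * \<bar>cos (2*x*Y)\<bar> \<le> 3 * 1" by (rule mult_mono[OF ee abs_cos_le_one]) auto
      hence "e * (exp (x^2 - Y^2) * \<bar>cos (2*x*Y)\<bar>) \<le> e * (3 * 1)" by (rule mult_left_mono) (use e0 in auto)
      hence "\<bar>e * exp (x^2 - Y^2) * cos (2*x*Y)\<bar> \<le> e * 3 * 1"
        using e0 by (simp add: abs_mult mult.assoc)
      hence "1/2 \<le> u x Y \<and> u x Y \<le> 2" using e1 by (auto simp: uf abs_le_iff)
      thus "case p of (x,Y) \<Rightarrow> 1/2 \<le> u x Y \<and> u x Y \<le> 2" using p by simp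
    qed
    show "\<exists>c0 C0. 0 < c0 \<and> (\<forall>(x,Y)\<in>Omega L. c0 \<le> u x Y \<and> u x Y \<le> C0)"
      by (rule exI[of _ "1/2::real"], rule exI[of _ "2::real"]) (use ub in simp)
    define Y0 where "Y0 = pi / (2*L)"
    have Y0: "0 < Y0" using L0 by (simp add: Y0_def)
    have a1: "2 * (L/2) * Y0 = pi/2" using L0 by (simp add: Y0_def)
    have a2: "2 * (L/4) * Y0 = pi/4" using L0 by (simp add: Y0_def)
    show "\<exists>(x,Y)\<in>Omega L. v x Y \<noteq> 0"
    proof (rule bexI[of _ "(L/2, Y0)"])
      show "(L/2, Y0) \<in> Omega L" using L0 Y0 by (auto simp: Omega_def)
      have "v (L/2) Y0 = - e * exp ((L/2)^2 - Y0^2) * 1" by (simp only: vf a1 sin_pi_half)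
      thus "case (L/2, Y0) of (x,Y) \<Rightarrow> v x Y \<noteq> 0" using e0 by simp
    qed
    show "\<exists>x1 x2 Y. x1 \<in> {0<..<L} \<and> x2 \<in> {0<..<L} \<and> Y > 0 \<and> u x1 Y \<noteq> u x2 Y"
    proof (rule exI[of _ "L/2"], rule exI[of _ "L/4"], rule exI[of _ Y0], intro conjI)
      show "L/2 \<in> {0<..<L}" "L/4 \<in> {0<..<L}" "0 < Y0" using L0 Y0 by auto
      have "u (L/2) Y0 = 1" by (simp only: uf a1 cos_pi_half mult_zero_right add_0_right)
      moreover have "u (L/4) Y0 \<noteq> 1"
      proof -
        have "e * exp ((L/4)^2 - Y0^2) * (sqrt 2 / 2) \<noteq> 0" using e0 by simp
        moreover have "u (L/4) Y0 = 1 + e * exp ((L/4)^2 - Y0^2) * (sqrt 2 / 2)" by (simp only: uf a2 cos_45)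
        ultimately show ?thesis by simp
      qed
      ultimately show "u (L/2) Y0 \<noteq> u (L/4) Y0" by simp
    qed
  qed
qed

end
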